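(* Let $d\ge 2$ and $k$ be integers with $0\le k\le d-1$. Then there is an integer $n=n(d,k)$ and a set of $n$ $k$-flats in $\mathbb{R}^d$ in general position which is not in convex position.
   Context: A $k$-flat is an affine subspace of $\mathbb{R}^d$ of dimension $k$. A set $\{U_1,\ldots,U_n\}$ of $k$-flats in $\mathbb{R}^d$ ($0\le k\le d-1$) is in convex position if there is a $d$-dimensional convex polytope $P\subset\mathbb{R}^d$ such that $U_i\cap P$ is a $k$-dimensional face of $P$ for every $i\in[n]$. General position: if $0\le k\le d-2$, the $k$-flats $U_1,\ldots,U_n$ are in general position if there is a $(d-k)$-flat $A$ such that $U_i\cap A$ is a single point for every $i$, no three of these $n$ points are collinear, and their affine hull equals $A$. If $k=d-1$, $n\ge d$ hyperplanes are in general position if every $d$ of them intersect in a single point and these $\binom nd$ points are pairwise distinct. *)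

theory Defs
  imports "HOL-Analysis.Analysis"
begin

definition k_flat :: "nat \<Rightarrow> 'a::euclidean_space set \<Rightarrow> bool" where
  "k_flat k U \<longleftrightarrow> affine U \<and> U \<noteq> {} \<and> aff_dim U = int k"

definition convex_position :: "nat \<Rightarrow> nat \<Rightarrow> (nat \<Rightarrow> 'a::euclidean_space set) \<Rightarrow> bool" where
  "convex_position k n U \<longleftrightarrow>
     (\<exists>P::'a set. polytope P \<and> aff_dim P = int DIM('a) \<and>
        (\<forall>i<n. (U i \<inter> P) face_of P \<and> aff_dim (U i \<inter> P) = int k))"

definition general_position :: "nat \<Rightarrow> nat \<Rightarrow> (nat \<Rightarrow> 'a::euclidean_space set) \<Rightarrow> bool" where
  "general_position k n U \<longleftrightarrow>
     (if k + 2 \<le> DIM('a) then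
        (\<exists>A p. k_flat (DIM('a) - k) A \<and>
           (\<forall>i<n. U i \<inter> A = {p i}) \<and>
           inj_on p {..<n} \<and>
           (\<forall>i<n. \<forall>j<n. \<forall>l<n. i \<noteq> j \<and> i \<noteq> l \<and> j \<noteq> l \<longrightarrow> \<not> collinear {p i, p j, p l}) \<and>
           affine hull (p ` {..<n}) = A)
      else
        n \<ge> DIM('a) \<and>
        (\<exists>q. (\<forall>I. I \<subseteq> {..<n} \<and> card I = DIM('a) \<longrightarrow> (\<Inter>i\<in>I. U i) = {q I}) \<and>
             inj_on q {I. I \<subseteq> {..<n} \<and> card I = DIM('a)}))"

end

theory Submission
  imports Defs
begin

lemma one_side:
  fixes a :: "'a::euclidean_space"
  assumes cP: "convex P" and F: "({x. a \<bullet> x = b} \<inter> P) face_of P"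
    and p: "p \<in> P" and q: "q \<in> P" and ap: "a \<bullet> p > b"
  shows "a \<bullet> q \<ge> b"
proof (rule ccontr)
  assume "\<not> a \<bullet> q \<ge> b"
  hence aq: "a \<bullet> q < b" by simp
  define t where "t = (b - a \<bullet> q) / (a \<bullet> p - a \<bullet> q)"
  have t0: "t > 0" and t1: "t < 1" using aq ap by (auto simp: t_def field_simps)
  define c where "c = (1 - t) *\<^sub>R q + t *\<^sub>R p"
  have cP': "c \<in> P" using cP p q t0 t1 unfolding c_def by (auto intro: convexD)
  have "a \<bullet> c = a \<bullet> q + t * (a \<bullet> p - a \<bullet> q)"
    by (simp add: c_def inner_add_right algebra_simps)
  also have "\<dots> = b" using aq ap by (simp add: t_def)
  finally have ac: "a \<bullet> c = b" .
  have pq: "q \<noteq> p" using aq ap by auto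
  have "c \<in> open_segment q p" using t0 t1 pq by (auto simp: in_segment c_def)
  hence "p \<in> {x. a \<bullet> x = b} \<inter> P"
    using F cP' ac p q unfolding face_of_def by blast
  thus False using ap by simp
qed

lemma inner_err_bound:
  fixes v y :: "'a::euclidean_space"
  assumes "\<And>b. b \<in> Basis \<Longrightarrow> \<bar>v \<bullet> b\<bar> \<le> e" "\<And>b. b \<in> Basis \<Longrightarrow> \<bar>y \<bullet> b\<bar> \<le> M"
  shows "\<bar>v \<bullet> y\<bar> \<le> real DIM('a) * e * M"
proof -
  have "\<bar>v \<bullet> y\<bar> = \<bar>\<Sum>b\<in>Basis. (v \<bullet> b) * (y \<bullet> b)\<bar>" by (subst euclidean_inner) (rule refl)
  also have "\<dots> \<le> (\<Sum>b\<in>Basis. \<bar>v \<bullet> b\<bar> * \<bar>y \<bullet> b\<bar>)"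
    by (rule order_trans[OF sum_abs]) (simp add: abs_mult)
  also have "\<dots> \<le> (\<Sum>b\<in>(Basis::'a set). e * M)"
  proof (intro sum_mono)
    fix b :: 'a assume b: "b \<in> Basis"
    show "\<bar>v \<bullet> b\<bar> * \<bar>y \<bullet> b\<bar> \<le> e * M"
      using assms[OF b] by (meson abs_ge_zero mult_mono order_trans)
  qed
  also have "\<dots> = real DIM('a) * e * M" by simp
  finally show ?thesis .
qed

lemma one_side2:
  fixes a :: "'a::euclidean_space"
  assumes cP: "convex P" and F: "({x. a \<bullet> x = b} \<inter> P) face_of P"
  shows "(\<forall>x\<in>P. a \<bullet> x \<ge> b) \<or> (\<forall>x\<in>P. a \<bullet> x \<le> b)"
proof (cases "\<exists>p\<in>P. a \<bullet> p > b")
  case True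
  then obtain p where "p \<in> P" "a \<bullet> p > b" by blast
  thus ?thesis using one_side[OF cP F] by blast
next
  case False thus ?thesis by (auto simp: not_less)
qed

definition cluster_ok :: "(nat \<Rightarrow> 'a::euclidean_space) \<Rightarrow> (nat \<Rightarrow> real) \<Rightarrow> nat \<Rightarrow> 'a \<Rightarrow> bool" where
  "cluster_ok W C n u \<longleftrightarrow> (\<exists>J c \<mu>. finite J \<and> J \<noteq> {} \<and> J \<subseteq> {..<n} \<and> c < n \<and> C c = 1 \<and>
      (\<forall>j\<in>J. C j = 1 \<and> (\<forall>b\<in>Basis. \<bar>(W j - u) \<bullet> b\<bar> \<le> 1 / (4 * real DIM('a)))) \<and>
      (\<forall>j\<in>J. \<mu> j \<ge> 0) \<and> sum \<mu> J > 1 \<and> W c = (\<Sum>j\<in>J. \<mu> j *\<^sub>R W j))"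

lemma cluster_okE:
  fixes W :: "nat \<Rightarrow> 'a::euclidean_space"
  assumes "cluster_ok W C n u"
  obtains J c \<mu> where "finite J" "J \<noteq> {}" "J \<subseteq> {..<n}" "c < n" "C c = 1"
      "\<forall>j\<in>J. C j = 1 \<and> (\<forall>b\<in>Basis. \<bar>(W j - u) \<bullet> b\<bar> \<le> 1 / (4 * real DIM('a)))"
      "\<forall>j\<in>J. \<mu> j \<ge> 0" "sum \<mu> J > 1" "W c = (\<Sum>j\<in>J. \<mu> j *\<^sub>R W j)"
  using assms unfolding cluster_ok_def by (elim exE conjE) (rule that; assumption)

lemma caseB_nonconvex:
  fixes W :: "nat \<Rightarrow> 'a::euclidean_space"
  assumes cP: "convex P"
    and faces: "\<And>i. i < n \<Longrightarrow> ({x. W i \<bullet> x = C i} \<inter> P) face_of P \<and> ({x. W i \<bullet> x = C i} \<inter> P) \<noteq> {}"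
    and b0: "b0 \<in> Basis" and W0: "W 0 = b0" "C 0 = 0" and n0: "0 < n"
    and cl: "\<And>b s. b \<in> Basis \<Longrightarrow> s \<in> {1, -1} \<Longrightarrow> cluster_ok W C n (s *\<^sub>R b)"
  shows False
proof -
  define e where "e = 1 / (4 * real DIM('a))"
  have dpos: "real DIM('a) > 0" by simp
  have de: "real DIM('a) * e = 1/4" using dpos by (simp add: e_def)
  have bound: "\<bar>y \<bullet> b\<bar> \<le> 2" if y: "y \<in> P" and b: "b \<in> Basis" for y b
  proof (rule ccontr)
    assume "\<not> \<bar>y \<bullet> b\<bar> \<le> 2"
    define M where "M = Max ((\<lambda>b. \<bar>y \<bullet> b\<bar>) ` Basis)"
    have fin: "finite ((\<lambda>b. \<bar>y \<bullet> b\<bar>) ` Basis)" by simp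
    have Mge: "\<bar>y \<bullet> b'\<bar> \<le> M" if "b' \<in> Basis" for b'
      unfolding M_def using that fin by (intro Max_ge) auto
    have "M \<in> (\<lambda>b. \<bar>y \<bullet> b\<bar>) ` Basis" unfolding M_def using fin
      by (intro Max_in) auto
    then obtain bs where bs: "bs \<in> Basis" "\<bar>y \<bullet> bs\<bar> = M" by auto
    have M2: "M > 2" using Mge[OF b] \<open>\<not> \<bar>y \<bullet> b\<bar> \<le> 2\<close> by linarith
    define s where "s = (if y \<bullet> bs \<ge> 0 then 1 else (-1::real))"
    have s: "s \<in> {1, -1}" by (simp add: s_def)
    have sy: "(s *\<^sub>R bs) \<bullet> y = M" using bs by (auto simp: s_def inner_commute)
    obtain J c \<mu> where J: "finite J" "J \<noteq> {}" "J \<subseteq> {..<n}" "c < n" "C c = 1"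
      and Jw: "\<forall>j\<in>J. C j = 1 \<and> (\<forall>b\<in>Basis. \<bar>(W j - s *\<^sub>R bs) \<bullet> b\<bar> \<le> 1 / (4 * real DIM('a)))"
      and mu: "\<forall>j\<in>J. \<mu> j \<ge> 0" "sum \<mu> J > 1" and Wc: "W c = (\<Sum>j\<in>J. \<mu> j *\<^sub>R W j)"
      by (rule cluster_okE[OF cl[OF bs(1) s]])
    have beyond: "\<forall>x\<in>P. W j \<bullet> x \<ge> 1" if j: "j \<in> J" for j
    proof -
      have err: "\<bar>(W j - s *\<^sub>R bs) \<bullet> y\<bar> \<le> real DIM('a) * e * M"
        using Jw j Mge by (intro inner_err_bound) (auto simp: e_def)
      have "W j \<bullet> y = (s *\<^sub>R bs) \<bullet> y + (W j - s *\<^sub>R bs) \<bullet> y" by (simp add: inner_diff_left)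
      moreover have "real DIM('a) * e * M = M/4" using de by simp
      moreover have "\<bar>(W j - s *\<^sub>R bs) \<bullet> y\<bar> \<le> M/4" using err calculation(2) by simp
      ultimately have "W j \<bullet> y \<ge> M - M/4" using sy by (simp only: abs_le_iff) linarith
      hence "W j \<bullet> y > 1" using M2 by linarith
      moreover have "({x. W j \<bullet> x = 1} \<inter> P) face_of P" using faces[of j] J(3) j Jw by auto
      ultimately show ?thesis using one_side[OF cP _ y] by blast
    qed
    obtain z where z: "z \<in> P" "W c \<bullet> z = 1" using faces[OF J(4)] J(5) by auto
    have "W c \<bullet> z = (\<Sum>j\<in>J. \<mu> j * (W j \<bullet> z))" by (simp add: Wc inner_sum_left)
    also have "\<dots> \<ge> (\<Sum>j\<in>J. \<mu> j * 1)"
      using beyond z(1) mu(1) by (intro sum_mono mult_left_mono) auto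
    finally have "W c \<bullet> z \<ge> sum \<mu> J" by simp
    thus False using z mu by linarith
  qed
  have side: "(\<forall>x\<in>P. b0 \<bullet> x \<ge> 0) \<or> (\<forall>x\<in>P. b0 \<bullet> x \<le> 0)"
    using one_side2[OF cP, of b0 0] faces[OF n0] W0 by auto
  show False
  proof -
    define s where "s = (if (\<forall>x\<in>P. b0 \<bullet> x \<ge> 0) then (-1::real) else 1)"
    have s: "s \<in> {1, -1}" by (simp add: s_def)
    have sx: "\<forall>x\<in>P. s * (b0 \<bullet> x) \<le> 0" using side by (auto simp: s_def)
    obtain J c \<mu> where J: "finite J" "J \<noteq> {}" "J \<subseteq> {..<n}" "c < n" "C c = 1"
      and Jw: "\<forall>j\<in>J. C j = 1 \<and> (\<forall>b\<in>Basis. \<bar>(W j - s *\<^sub>R b0) \<bullet> b\<bar> \<le> 1 / (4 * real DIM('a)))"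
      and "\<forall>j\<in>J. \<mu> j \<ge> 0" "sum \<mu> J > 1" "W c = (\<Sum>j\<in>J. \<mu> j *\<^sub>R W j)"
      by (rule cluster_okE[OF cl[OF b0 s]])
    obtain j where j: "j \<in> J" using J(2) by blast
    obtain z where z: "z \<in> P" "W j \<bullet> z = 1" using faces[of j] J(3) j Jw by auto
    have err: "\<bar>(W j - s *\<^sub>R b0) \<bullet> z\<bar> \<le> real DIM('a) * e * 2"
      using Jw j bound[OF z(1)] by (intro inner_err_bound) (auto simp: e_def)
    have "W j \<bullet> z = s * (b0 \<bullet> z) + (W j - s *\<^sub>R b0) \<bullet> z" by (simp add: inner_diff_left)
    moreover have "real DIM('a) * e * 2 = 1/2" using de by simp
    moreover have "\<bar>(W j - s *\<^sub>R b0) \<bullet> z\<bar> \<le> 1/2" using err calculation(2) by simp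
    moreover have "s * (b0 \<bullet> z) \<le> 0" using sx z(1) by blast
    ultimately have "W j \<bullet> z \<le> 1/2" by (simp only: abs_le_iff) linarith
    thus False using z by simp
  qed
qed

definition GP :: "nat \<Rightarrow> (nat \<Rightarrow> 'a::euclidean_space) \<Rightarrow> (nat \<Rightarrow> real) \<Rightarrow> bool" where
  "GP m W C \<longleftrightarrow> (\<forall>I. I \<subseteq> {..<m} \<and> card I \<le> DIM('a) \<longrightarrow> inj_on W I \<and> independent (W ` I)) \<and>
     (\<forall>I. I \<subseteq> {..<m} \<and> card I = Suc DIM('a) \<longrightarrow> \<not> (\<exists>x. \<forall>i\<in>I. W i \<bullet> x = C i))"

lemma span_full:
  fixes W :: "nat \<Rightarrow> 'a::euclidean_space"
  assumes "finite J" "card J = DIM('a)" "inj_on W J" "independent (W ` J)"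
  shows "span (W ` J) = UNIV"
proof -
  have "UNIV \<subseteq> span (W ` J)"
    using assms by (intro card_ge_dim_independent) (auto simp: card_image)
  thus ?thesis by auto
qed

lemma sol_unique:
  fixes W :: "nat \<Rightarrow> 'a::euclidean_space"
  assumes "finite J" "card J = DIM('a)" "inj_on W J" "independent (W ` J)"
    and x: "\<forall>i\<in>J. W i \<bullet> x = C i" and y: "\<forall>i\<in>J. W i \<bullet> y = C i"
  shows "x = y"
proof -
  have sp: "span (W ` J) = UNIV" using span_full assms(1-4) by blast
  have "orthogonal (x - y) a" if "a \<in> span (W ` J)" for a
  proof (rule orthogonal_to_span[OF that])
    fix z assume "z \<in> W ` J"
    then obtain i where "i \<in> J" "z = W i" by auto
    thus "orthogonal (x - y) z" using x y by (simp add: orthogonal_def inner_commute[of "x - y"] inner_diff_right)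
  qed
  hence "orthogonal (x - y) (x - y)" using sp by auto
  thus ?thesis by (simp add: orthogonal_def)
qed

lemma sol_exists:
  fixes W :: "nat \<Rightarrow> 'a::euclidean_space"
  assumes fJ: "finite J" and cJ: "card J = DIM('a)" and inj: "inj_on W J" and ind: "independent (W ` J)"
  shows "\<exists>x. \<forall>i\<in>J. W i \<bullet> x = C i"
proof -
  obtain \<beta> where \<beta>: "bij_betw \<beta> J (Basis::'a set)"
  proof -
    have fB: "finite (Basis::'a set)" by simp
    show ?thesis using finite_same_card_bij[OF fJ fB] cJ that by blast
  qed
  have coef: "(\<Sum>i\<in>J. a i *\<^sub>R \<beta> i) \<bullet> \<beta> i0 = a i0" if i0: "i0 \<in> J" for a i0
  proof -
    have "(\<Sum>i\<in>J. a i *\<^sub>R \<beta> i) \<bullet> \<beta> i0 = (\<Sum>i\<in>J. a i * (\<beta> i \<bullet> \<beta> i0))"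
      by (simp add: inner_sum_left)
    also have "\<dots> = (\<Sum>i\<in>J. if i = i0 then a i else 0)"
    proof (rule sum.cong[OF refl])
      fix i assume i: "i \<in> J"
      have "\<beta> i \<in> Basis" "\<beta> i0 \<in> Basis" using \<beta> i i0 by (auto simp: bij_betw_def)
      moreover have "\<beta> i = \<beta> i0 \<longleftrightarrow> i = i0" using \<beta> i i0 by (auto simp: bij_betw_def inj_on_def)
      ultimately show "a i * (\<beta> i \<bullet> \<beta> i0) = (if i = i0 then a i else 0)"
        by (auto simp: inner_Basis)
    qed
    also have "\<dots> = a i0" using fJ i0 by simp
    finally show ?thesis .
  qed
  define h where "h x = (\<Sum>i\<in>J. (W i \<bullet> x) *\<^sub>R \<beta> i)" for x
  have lin: "linear h" unfolding h_def
    by (intro linearI) (auto simp: inner_add_right scaleR_add_left sum.distrib scaleR_sum_right)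
  have sp: "span (W ` J) = UNIV" using span_full fJ cJ inj ind by blast
  have "inj h"
  proof (rule linear_injective_0[OF lin, THEN iffD2], intro allI impI)
    fix x assume hx: "h x = 0"
    have Wx: "W i \<bullet> x = 0" if "i \<in> J" for i
      using coef[OF that, of "\<lambda>i. W i \<bullet> x"] hx by (simp add: h_def)
    have "orthogonal x a" if "a \<in> span (W ` J)" for a
    proof (rule orthogonal_to_span[OF that])
      fix z assume "z \<in> W ` J"
      then obtain i where "i \<in> J" "z = W i" by auto
      thus "orthogonal x z" using Wx by (auto simp: orthogonal_def inner_commute)
    qed
    hence "orthogonal x x" using sp by auto
    thus "x = 0" by (simp add: orthogonal_def)
  qed
  hence "surj h" using lin by (intro linear_injective_imp_surjective) auto
  then obtain x where x: "h x = (\<Sum>i\<in>J. C i *\<^sub>R \<beta> i)" by (metis surjD)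
  have "W i \<bullet> x = C i" if "i \<in> J" for i
    using coef[OF that, of "\<lambda>i. W i \<bullet> x"] coef[OF that, of C] x by (simp add: h_def)
  thus ?thesis by blast
qed

lemma gp_extend:
  fixes W :: "nat \<Rightarrow> 'a::euclidean_space"
  assumes gp: "GP m W C" and Cm: "C m = 1" and S: "\<not> negligible S"
  shows "\<exists>v\<in>S. GP (Suc m) (W(m := v)) C"
proof -
  have gp1: "inj_on W I \<and> independent (W ` I)" if "I \<subseteq> {..<m}" "card I \<le> DIM('a)" for I
    using gp that unfolding GP_def by blast
  have gp2: "\<not> (\<exists>x. \<forall>i\<in>I. W i \<bullet> x = C i)" if "I \<subseteq> {..<m}" "card I = Suc DIM('a)" for I
    using gp that unfolding GP_def by blast
  define F1 where "F1 = {J. J \<subseteq> {..<m} \<and> card J < DIM('a)}"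
  define F2 where "F2 = {J. J \<subseteq> {..<m} \<and> card J = DIM('a)}"
  define Bad1 where "Bad1 = \<Union> ((\<lambda>J. span (W ` J)) ` F1)"
  define Bad2 where "Bad2 = \<Union> ((\<lambda>J. {v. \<exists>x. (\<forall>i\<in>J. W i \<bullet> x = C i) \<and> v \<bullet> x = 1}) ` F2)"
  have fF1: "finite F1" unfolding F1_def by (rule finite_subset[of _ "Pow {..<m}"]) auto
  have fF2: "finite F2" unfolding F2_def by (rule finite_subset[of _ "Pow {..<m}"]) auto
  have n1: "negligible Bad1" unfolding Bad1_def
  proof (rule negligible_Union)
    show "finite ((\<lambda>J. span (W ` J)) ` F1)" using fF1 by simp
  next
    fix T assume "T \<in> (\<lambda>J. span (W ` J)) ` F1"
    then obtain J where J: "J \<in> F1" "T = span (W ` J)" by auto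
    have fJ: "finite J" using J(1) unfolding F1_def using finite_subset by blast
    have "dim T = dim (W ` J)" using J(2) by (simp add: dim_span)
    also have "\<dots> \<le> card (W ` J)" using fJ by (intro dim_le_card) (auto intro: span_base)
    also have "\<dots> \<le> card J" using fJ by (rule card_image_le)
    also have "\<dots> < DIM('a)" using J(1) unfolding F1_def by simp
    finally show "negligible T" by (rule negligible_lowdim)
  qed
  have n2: "negligible Bad2" unfolding Bad2_def
  proof (rule negligible_Union)
    show "finite ((\<lambda>J. {v. \<exists>x. (\<forall>i\<in>J. W i \<bullet> x = C i) \<and> v \<bullet> x = 1}) ` F2)" using fF2 by simp
  next
    fix T assume "T \<in> (\<lambda>J. {v. \<exists>x. (\<forall>i\<in>J. W i \<bullet> x = C i) \<and> v \<bullet> x = 1}) ` F2"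
    then obtain J where J: "J \<in> F2" and T: "T = {v. \<exists>x. (\<forall>i\<in>J. W i \<bullet> x = C i) \<and> v \<bullet> x = 1}" by auto
    have fJ: "finite J" using J unfolding F2_def using finite_subset by blast
    have cJ: "card J = DIM('a)" and sJ: "J \<subseteq> {..<m}" using J unfolding F2_def by auto
    have ii: "inj_on W J" "independent (W ` J)" using gp1[OF sJ] cJ by auto
    show "negligible T"
    proof (cases "\<exists>x0. \<forall>i\<in>J. W i \<bullet> x0 = C i")
      case True
      then obtain x0 where x0: "\<forall>i\<in>J. W i \<bullet> x0 = C i" by blast
      have "T \<subseteq> {v. x0 \<bullet> v = 1}"
      proof
        fix v assume "v \<in> T"
        then obtain x where x: "\<forall>i\<in>J. W i \<bullet> x = C i" and vx: "v \<bullet> x = 1" using T by auto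
        have "x = x0" using sol_unique[OF fJ cJ ii x x0] .
        thus "v \<in> {v. x0 \<bullet> v = 1}" using vx by (simp add: inner_commute)
      qed
      moreover have "negligible {v. x0 \<bullet> v = 1}" by (rule negligible_hyperplane) simp
      ultimately show ?thesis using negligible_subset by blast
    next
      case False
      hence "T = {}" using T by auto
      thus ?thesis by simp
    qed
  qed
  have "\<not> S \<subseteq> Bad1 \<union> Bad2"
  proof
    assume "S \<subseteq> Bad1 \<union> Bad2"
    hence "negligible S" by (rule negligible_subset[OF negligible_Un[OF n1 n2]])
    thus False using S by contradiction
  qed
  then obtain v where v: "v \<in> S" "v \<notin> Bad1" "v \<notin> Bad2" by blast
  define W' where "W' = W(m := v)"
  have agree: "W' i = W i" if "i \<in> J" "J \<subseteq> {..<m}" for i J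
    using that by (auto simp: W'_def)
  have "GP (Suc m) W' C"
    unfolding GP_def
  proof (rule conjI; intro allI impI)
    fix I assume I: "I \<subseteq> {..<Suc m} \<and> card I \<le> DIM('a)"
    show "inj_on W' I \<and> independent (W' ` I)"
    proof (cases "m \<in> I")
      case False
      hence sI: "I \<subseteq> {..<m}" using I by (auto simp: less_Suc_eq)
      have "W' ` I = W ` I" using agree[OF _ sI] by (rule image_cong[OF refl])
      moreover have "inj_on W' I = inj_on W I" using agree[OF _ sI] by (rule inj_on_cong)
      ultimately show ?thesis using gp1[OF sI] I by simp
    next
      case True
      define J where "J = I - {m}"
      have sJ: "J \<subseteq> {..<m}" using I by (auto simp: J_def less_Suc_eq)
      have fI: "finite I" using I finite_subset[OF _ finite_lessThan] by blast
      have "card I > 0" using True fI card_gt_0_iff by blast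
      moreover have "card J = card I - 1" using True fI by (simp add: J_def card_Diff_singleton)
      ultimately have cJ: "card J < DIM('a)" using I by linarith
      have IJ: "I = insert m J" using True by (auto simp: J_def)
      have mJ: "m \<notin> J" by (simp add: J_def)
      have ii: "inj_on W J" "independent (W ` J)" using gp1[OF sJ] cJ by auto
      have JF1: "J \<in> F1" using sJ cJ by (simp add: F1_def)
      have vsp: "v \<notin> span (W ` J)"
      proof
        assume "v \<in> span (W ` J)"
        hence "v \<in> Bad1" unfolding Bad1_def using JF1 by (rule UN_I[rotated])
        thus False using v(2) by contradiction
      qed
      have Wm: "W' m = v" by (simp add: W'_def)
      have img: "W' ` J = W ` J" using agree[OF _ sJ] by (rule image_cong[OF refl])
      have "inj_on W' J = inj_on W J" using agree[OF _ sJ] by (rule inj_on_cong)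
      hence injJ: "inj_on W' J" using ii(1) by simp
      have imI: "W' ` I = insert v (W ` J)" using IJ img Wm by simp
      have ind: "independent (W' ` I)" unfolding imI using vsp ii(2) by (rule independent_insertI)
      have vn: "v \<notin> W ` J"
      proof
        assume "v \<in> W ` J"
        hence "v \<in> span (W ` J)" by (rule span_base)
        thus False using vsp by contradiction
      qed
      have JJ: "J - {m} = J" using mJ by simp
      have "W' m \<notin> W' ` (J - {m})" unfolding JJ img Wm by (rule vn)
      hence inj: "inj_on W' I" unfolding IJ inj_on_insert JJ using injJ by blast
      show ?thesis using ind inj by (rule conjI[rotated])
    qed
  next
    fix I assume I: "I \<subseteq> {..<Suc m} \<and> card I = Suc DIM('a)"
    show "\<not> (\<exists>x. \<forall>i\<in>I. W' i \<bullet> x = C i)"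
    proof
      assume "\<exists>x. \<forall>i\<in>I. W' i \<bullet> x = C i"
      then obtain x where x: "\<forall>i\<in>I. W' i \<bullet> x = C i" by blast
      show False
      proof (cases "m \<in> I")
        case False
        hence sI: "I \<subseteq> {..<m}" using I by (auto simp: less_Suc_eq)
        have "\<forall>i\<in>I. W i \<bullet> x = C i" using x agree[OF _ sI] by simp
        thus False using gp2[OF sI] I by blast
      next
        case True
        define J where "J = I - {m}"
        have sJ: "J \<subseteq> {..<m}" using I by (auto simp: J_def less_Suc_eq)
        have fI: "finite I" using I finite_subset[OF _ finite_lessThan] by blast
        have cJ: "card J = DIM('a)" using I True fI by (simp add: J_def card_Diff_singleton)
        have xJ: "\<forall>i\<in>J. W i \<bullet> x = C i"
        proof
          fix i assume i: "i \<in> J"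
          hence "i \<in> I" by (simp add: J_def)
          hence "W' i \<bullet> x = C i" using x by blast
          thus "W i \<bullet> x = C i" using agree[OF i sJ] by simp
        qed
        have "W' m \<bullet> x = C m" using x True by blast
        hence "v \<bullet> x = 1" using Cm by (simp add: W'_def)
        hence "v \<in> {v. \<exists>x. (\<forall>i\<in>J. W i \<bullet> x = C i) \<and> v \<bullet> x = 1}" using xJ by blast
        moreover have JF2: "J \<in> F2" using sJ cJ by (simp add: F2_def)
        ultimately have "v \<in> Bad2" unfolding Bad2_def by (rule UN_I[rotated])
        thus False using v(3) by blast
      qed
    qed
  qed
  thus ?thesis using v(1) unfolding W'_def by blast
qed

lemma indep_coeff:
  fixes W :: "nat \<Rightarrow> 'a::euclidean_space"
  assumes inj: "inj_on W K" and ind: "independent (W ` K)"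
    and s: "(\<Sum>i\<in>K. c i *\<^sub>R W i) = 0" and i: "i \<in> K"
  shows "c i = 0"
proof -
  define c' where "c' x = c (the_inv_into K W x)" for x
  have "(\<Sum>x\<in>W ` K. c' x *\<^sub>R x) = (\<Sum>i\<in>K. c' (W i) *\<^sub>R W i)"
    using sum.reindex[OF inj] by (simp add: comp_def)
  also have "\<dots> = (\<Sum>i\<in>K. c i *\<^sub>R W i)"
    using inj by (intro sum.cong refl) (simp add: c'_def the_inv_into_f_f)
  finally have "(\<Sum>x\<in>W ` K. c' x *\<^sub>R x) = 0" using s by simp
  hence "c' (W i) = 0" using ind i unfolding independent_explicit by blast
  thus ?thesis using inj i by (simp add: c'_def the_inv_into_f_f)
qed

lemma divmod_aux: "j < Suc d \<Longrightarrow> (q * Suc d + j) div Suc d = q \<and> (q * Suc d + j) mod Suc d = j"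
  by (simp add: add.commute[of "q * Suc d"] del: mult_Suc_right)

lemma bb_inner:
  fixes bb :: "nat \<Rightarrow> 'a::euclidean_space"
  assumes bb: "bij_betw bb {..<d} Basis" and "i < d" "j < d"
  shows "bb i \<bullet> bb j = (if i = j then 1 else 0)"
proof -
  have "bb i \<in> Basis" "bb j \<in> Basis" using bb assms by (auto simp: bij_betw_def)
  moreover have "bb i = bb j \<longleftrightarrow> i = j" using bb assms by (auto simp: bij_betw_def inj_on_def)
  ultimately show ?thesis by (auto simp: inner_Basis)
qed


lemma cluster_okI:
  fixes W :: "nat \<Rightarrow> 'a::euclidean_space"
  assumes "finite J" "J \<noteq> {}" "J \<subseteq> {..<n}" "c < n" "C c = 1"
      "\<forall>j\<in>J. C j = 1 \<and> (\<forall>b\<in>Basis. \<bar>(W j - u) \<bullet> b\<bar> \<le> 1 / (4 * real DIM('a)))"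
      "\<forall>j\<in>J. \<mu> j \<ge> 0" "sum \<mu> J > 1" "W c = (\<Sum>j\<in>J. \<mu> j *\<^sub>R W j)"
  shows "cluster_ok W C n u"
  unfolding cluster_ok_def
  by (rule exI[of _ J], rule exI[of _ c], rule exI[of _ \<mu>]) (intro conjI; fact assms)

lemma caseB_exists:
  assumes d2: "DIM('a::euclidean_space) \<ge> 2"
  shows "\<exists>N (W :: nat \<Rightarrow> 'a) C. GP N W C \<and> DIM('a) < N \<and> C 0 = 0 \<and> (\<forall>i. 0 < i \<longrightarrow> C i = 1) \<and>
     W 0 \<in> Basis \<and> (\<forall>b s. b \<in> Basis \<longrightarrow> s \<in> {1, -1} \<longrightarrow> cluster_ok W C N (s *\<^sub>R b))"
proof -
  define d where "d = DIM('a)"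
  have d2': "d \<ge> 2" using d2 by (simp add: d_def)
  obtain bb where bb: "bij_betw bb {..<d} (Basis::'a set)"
  proof -
    have fB: "finite (Basis::'a set)" by simp
    from ex_bij_betw_nat_finite[OF fB] obtain h where "bij_betw h {0..<card (Basis::'a set)} (Basis::'a set)" by blast
    thus ?thesis using that by (simp add: d_def atLeast0LessThan)
  qed
  have bbB: "bb j \<in> Basis" if "j < d" for j using bb that by (auto simp: bij_betw_def)
  have bbsurj: "\<exists>j<d. b = bb j" if "b \<in> Basis" for b
    using bb that unfolding bij_betw_def by auto
  define C :: "nat \<Rightarrow> real" where "C i = (if i = 0 then 0 else 1)" for i
  define cq where "cq i = (i - 1) div Suc d" for i
  define cr where "cr i = (i - 1) mod Suc d" for i
  define u where "u q = (if even q then 1 else -1::real) *\<^sub>R bb (q div 2)" for q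
  define e0 where "e0 = 1 / (4 * real d)"
  have e0pos: "e0 > 0" using d2' by (simp add: e0_def)
  define St where "St m W \<longleftrightarrow> W 0 = bb 0 \<and>
      (\<forall>i. 1 \<le> i \<and> i < m \<and> cr i < d \<longrightarrow> norm (W i - u (cq i)) < e0) \<and>
      (\<forall>i. 1 \<le> i \<and> i < m \<and> cr i = d \<longrightarrow> (\<exists>\<mu>. (\<forall>j<d. \<mu> j \<ge> 0) \<and> sum \<mu> {..<d} > 1 \<and>
          W i = (\<Sum>j<d. \<mu> j *\<^sub>R W (i - d + j))))" for m and W :: "nat \<Rightarrow> 'a"
  have crd: "d < i" if "cr i = d" "1 \<le> i" for i
  proof -
    have a: "(i - 1) mod Suc d \<le> i - 1" by (rule mod_less_eq_dividend)
    have b: "(i - 1) mod Suc d = d" using that(1) by (simp add: cr_def)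
    show ?thesis using a b that(2) by arith
  qed
  have St_ext: "St (Suc m) (W(m := v))"
    if st: "St m W" and m1: "1 \<le> m"
      and new1: "cr m < d \<Longrightarrow> norm (v - u (cq m)) < e0"
      and new2: "cr m = d \<Longrightarrow> (\<exists>\<mu>. (\<forall>j<d. \<mu> j \<ge> 0) \<and> sum \<mu> {..<d} > 1 \<and>
          v = (\<Sum>j<d. \<mu> j *\<^sub>R W (m - d + j)))" for m W v
  proof -
    have A: "W 0 = bb 0" "\<forall>i. 1 \<le> i \<and> i < m \<and> cr i < d \<longrightarrow> norm (W i - u (cq i)) < e0"
      "\<forall>i. 1 \<le> i \<and> i < m \<and> cr i = d \<longrightarrow> (\<exists>\<mu>. (\<forall>j<d. \<mu> j \<ge> 0) \<and> sum \<mu> {..<d} > 1 \<and>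
          W i = (\<Sum>j<d. \<mu> j *\<^sub>R W (i - d + j)))" using st unfolding St_def by blast+
    have B: "norm ((W(m := v)) i - u (cq i)) < e0" if "1 \<le> i" "i < Suc m" "cr i < d" for i
    proof (cases "i = m")
      case True thus ?thesis using new1 that by simp
    next
      case False thus ?thesis using A(2) that by simp
    qed
    have Cc: "\<exists>\<mu>. (\<forall>j<d. \<mu> j \<ge> 0) \<and> sum \<mu> {..<d} > 1 \<and>
          (W(m := v)) i = (\<Sum>j<d. \<mu> j *\<^sub>R (W(m := v)) (i - d + j))"
      if i: "1 \<le> i" "i < Suc m" "cr i = d" for i
    proof -
      have di: "d < i" using crd i by blast
      have agree: "(W(m := v)) (i - d + j) = W (i - d + j)" if "j < d" for j
      proof -
        have "i - d + j \<noteq> m" using that di i(2) by arith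
        thus ?thesis by simp
      qed
      show ?thesis
      proof (cases "i = m")
        case True
        then obtain \<mu> where mu: "\<forall>j<d. \<mu> j \<ge> 0" "sum \<mu> {..<d} > 1" "v = (\<Sum>j<d. \<mu> j *\<^sub>R W (m - d + j))"
          using new2 i by blast
        have "(W(m := v)) i = (\<Sum>j<d. \<mu> j *\<^sub>R (W(m := v)) (i - d + j))"
          using mu(3) True agree by simp
        thus ?thesis using mu(1,2) by blast
      next
        case False
        hence "i < m" using i by simp
        then obtain \<mu> where mu: "\<forall>j<d. \<mu> j \<ge> 0" "sum \<mu> {..<d} > 1" "W i = (\<Sum>j<d. \<mu> j *\<^sub>R W (i - d + j))"
          using A(3) i by blast
        have "(W(m := v)) i = (\<Sum>j<d. \<mu> j *\<^sub>R (W(m := v)) (i - d + j))"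
          using mu(3) False agree by simp
        thus ?thesis using mu(1,2) by blast
      qed
    qed
    have Z: "(W(m := v)) 0 = bb 0" using A(1) m1 by simp
    show ?thesis unfolding St_def
    proof (intro conjI allI impI)
      show "(W(m := v)) 0 = bb 0" by (rule Z)
    next
      fix i assume "1 \<le> i \<and> i < Suc m \<and> cr i < d"
      thus "norm ((W(m := v)) i - u (cq i)) < e0" using B by blast
    next
      fix i assume "1 \<le> i \<and> i < Suc m \<and> cr i = d"
      thus "\<exists>\<mu>. (\<forall>j<d. \<mu> j \<ge> 0) \<and> sum \<mu> {..<d} > 1 \<and>
          (W(m := v)) i = (\<Sum>j<d. \<mu> j *\<^sub>R (W(m := v)) (i - d + j))" using Cc by blast
    qed
  qed
  have main: "\<exists>W. GP m W C \<and> St m W" if "1 \<le> m" for m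
    using that
  proof (induction m)
    case 0 thus ?case by simp
  next
    case (Suc m)
    show ?case
    proof (cases "m = 0")
      case True
      define W :: "nat \<Rightarrow> 'a" where "W = (\<lambda>_. bb 0)"
      have "GP 1 W C"
        unfolding GP_def
      proof (rule conjI; intro allI impI)
        fix I :: "nat set" assume I: "I \<subseteq> {..<1} \<and> card I \<le> DIM('a)"
        hence I0: "I \<subseteq> {0}" by auto
        have "inj_on W I" using I0 by (auto simp: inj_on_def)
        moreover have "W ` I \<subseteq> Basis" using bbB d2' by (auto simp: W_def)
        hence "independent (W ` I)" using independent_Basis by (rule independent_mono[rotated])
        ultimately show "inj_on W I \<and> independent (W ` I)" by blast
      next
        fix I :: "nat set" assume I: "I \<subseteq> {..<1} \<and> card I = Suc DIM('a)"
        hence "card I \<le> card {0::nat}" by (intro card_mono) auto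
        thus "\<not> (\<exists>x. \<forall>i\<in>I. W i \<bullet> x = C i)" using I d2 by simp
      qed
      moreover have "St 1 W" unfolding St_def by (simp add: W_def)
      ultimately show ?thesis using True by (intro exI[of _ W]) simp
    next
      case False
      then obtain W where gp: "GP m W C" and st: "St m W" using Suc by auto
      have m1: "1 \<le> m" using False by simp
      have Cm: "C m = 1" using False by (simp add: C_def)
      have crle: "cr m < Suc d" by (simp add: cr_def)
      show ?thesis
      proof (cases "cr m < d")
        case True
        have "\<not> negligible (ball (u (cq m)) e0)" by (rule open_not_negligible) (use e0pos in auto)
        from gp_extend[OF gp Cm this] obtain v where
          v: "v \<in> ball (u (cq m)) e0" and gp': "GP (Suc m) (W(m := v)) C" by blast
        have "norm (v - u (cq m)) < e0" using v by (simp add: dist_norm norm_minus_commute)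
        hence stS: "St (Suc m) (W(m := v))" using True by (intro St_ext[OF st m1]) auto
        show ?thesis by (rule exI[of _ "W(m := v)"], rule conjI[OF gp' stS])
      next
        case False
        hence crm: "cr m = d" using crle by simp
        have md: "d < m" using crd crm m1 by blast
        define K where "K = (\<lambda>j. m - d + j) ` {..<d}"
        have injs: "inj_on (\<lambda>j. m - d + j) {..<d}" by (auto simp: inj_on_def)
        have Ksub: "K \<subseteq> {..<m}" using md by (auto simp: K_def)
        have cK: "card K = d" using injs by (simp add: K_def card_image)
        have gp1: "\<forall>I. I \<subseteq> {..<m} \<and> card I \<le> DIM('a) \<longrightarrow> inj_on W I \<and> independent (W ` I)"
          using gp unfolding GP_def by (rule conjunct1)
        have ii: "inj_on W K \<and> independent (W ` K)"
          using gp1[rule_format, of K] Ksub cK by (simp add: d_def)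
        define g where "g v = (\<Sum>j<d. (v \<bullet> bb j) *\<^sub>R W (m - d + j))" for v
        have g_alt: "g v = (\<Sum>i\<in>K. (v \<bullet> bb (i - (m - d))) *\<^sub>R W i)" for v
          unfolding K_def g_def by (subst sum.reindex[OF injs]) (simp add: comp_def)
        have lin: "linear g" unfolding g_def
          by (intro linearI) (auto simp: inner_add_left scaleR_add_left sum.distrib scaleR_sum_right)
        have injg: "inj g"
        proof (rule linear_injective_0[OF lin, THEN iffD2], intro allI impI)
          fix v assume gv: "g v = 0"
          have z: "v \<bullet> bb j = 0" if j: "j < d" for j
          proof -
            have "m - d + j \<in> K" using j by (auto simp: K_def)
            from indep_coeff[OF ii[THEN conjunct1] ii[THEN conjunct2] gv[unfolded g_alt] this]
            show ?thesis by simp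
          qed
          have "\<forall>b\<in>Basis. v \<bullet> b = 0" using z bbsurj by blast
          thus "v = 0" by (simp add: euclidean_all_zero_iff)
        qed
        have surjg: "surj g" by (rule linear_injective_imp_surjective[OF lin injg]) simp
        define v0 where "v0 = (\<Sum>k<d. (2 / real d) *\<^sub>R bb k)"
        define r where "r = 1 / real d"
        have rpos: "r > 0" using d2' by (simp add: r_def)
        have "open (g ` ball v0 r)" by (rule open_surjective_linear_image[OF open_ball lin surjg])
        moreover have "g ` ball v0 r \<noteq> {}" using rpos by simp
        ultimately have nn: "\<not> negligible (g ` ball v0 r)" by (rule open_not_negligible)
        from gp_extend[OF gp Cm nn] obtain w where
          w: "w \<in> g ` ball v0 r" and gp': "GP (Suc m) (W(m := w)) C" by blast
        from w obtain v where v: "v \<in> ball v0 r" "w = g v" by blast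
        define \<mu> where "\<mu> j = v \<bullet> bb j" for j
        have v0j: "v0 \<bullet> bb j = 2 / real d" if j: "j < d" for j
        proof -
          have "v0 \<bullet> bb j = (\<Sum>k<d. (2 / real d) * (bb k \<bullet> bb j))"
            by (simp add: v0_def inner_sum_left)
          also have "\<dots> = (\<Sum>k<d. if k = j then 2 / real d else 0)"
            using bb_inner[OF bb _ j] by (intro sum.cong refl) auto
          also have "\<dots> = 2 / real d" using j by simp
          finally show ?thesis .
        qed
        have mugt: "\<mu> j > 1 / real d" if j: "j < d" for j
        proof -
          have "\<bar>(v - v0) \<bullet> bb j\<bar> \<le> norm (v - v0)" using bbB[OF j] by (rule Basis_le_norm)
          also have "\<dots> < r" using v(1) by (simp add: dist_norm norm_minus_commute)
          finally have "\<bar>(v - v0) \<bullet> bb j\<bar> < 1 / real d" by (simp add: r_def)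
          moreover have "v \<bullet> bb j = v0 \<bullet> bb j + (v - v0) \<bullet> bb j" by (simp add: inner_diff_left)
          ultimately show ?thesis using v0j[OF j] by (simp add: \<mu>_def abs_less_iff)
        qed
        have "(\<Sum>j<d. 1 / real d) < sum \<mu> {..<d}"
          using d2' mugt by (intro sum_strict_mono) (auto simp: lessThan_empty_iff)
        hence musum: "sum \<mu> {..<d} > 1" using d2' by simp
        have mupos: "\<forall>j<d. \<mu> j \<ge> 0"
        proof (intro allI impI)
          fix j assume "j < d"
          from mugt[OF this] show "\<mu> j \<ge> 0" by (smt (verit) divide_nonneg_nonneg of_nat_0_le_iff)
        qed
        have "w = (\<Sum>j<d. \<mu> j *\<^sub>R W (m - d + j))" using v(2) by (simp add: g_def \<mu>_def)
        hence stS: "St (Suc m) (W(m := w))" using crm mupos musum by (intro St_ext[OF st m1]) auto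
        show ?thesis by (rule exI[of _ "W(m := w)"], rule conjI[OF gp' stS])
      qed
    qed
  qed
  define N where "N = 1 + 2 * d * Suc d"
  obtain W where gp: "GP N W C" and st: "St N W" using main[of N] by (auto simp: N_def)
  have stA: "W 0 = bb 0" "\<forall>i. 1 \<le> i \<and> i < N \<and> cr i < d \<longrightarrow> norm (W i - u (cq i)) < e0"
      "\<forall>i. 1 \<le> i \<and> i < N \<and> cr i = d \<longrightarrow> (\<exists>\<mu>. (\<forall>j<d. \<mu> j \<ge> 0) \<and> sum \<mu> {..<d} > 1 \<and>
          W i = (\<Sum>j<d. \<mu> j *\<^sub>R W (i - d + j)))" using st unfolding St_def by blast+
  have cl: "cluster_ok W C N (s *\<^sub>R b)" if b: "b \<in> Basis" and s: "s \<in> {1, -1}" for b s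
  proof -
    obtain k where k: "k < d" "b = bb k" using bbsurj[OF b] by blast
    define q where "q = (if s = 1 then 2 * k else 2 * k + 1)"
    have uq: "u q = s *\<^sub>R b" using s k by (auto simp: q_def u_def)
    have q2d: "q + 1 \<le> 2 * d" using k by (auto simp: q_def)
    define base where "base = 1 + q * Suc d"
    have cqr: "cq (base + j) = q \<and> cr (base + j) = j" if "j < Suc d" for j
      using divmod_aux[OF that, of q] by (simp add: cq_def cr_def base_def)
    have "(q + 1) * Suc d \<le> (2 * d) * Suc d" using q2d by (rule mult_right_mono) simp
    hence bN: "base + d < N" by (simp add: base_def N_def algebra_simps)
    define J where "J = (\<lambda>j. base + j) ` {..<d}"
    have injb: "inj_on (\<lambda>j. base + j) {..<d}" by (auto simp: inj_on_def)
    have fJ: "finite J" by (simp add: J_def)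
    have J0: "J \<noteq> {}" using d2' by (auto simp: J_def lessThan_empty_iff)
    have JN: "J \<subseteq> {..<N}" using bN by (auto simp: J_def)
    have C1: "C i = 1" if "1 \<le> i" for i using that by (simp add: C_def)
    have Jw: "\<forall>j\<in>J. C j = 1 \<and> (\<forall>b'\<in>Basis. \<bar>(W j - s *\<^sub>R b) \<bullet> b'\<bar> \<le> 1 / (4 * real DIM('a)))"
    proof
      fix i assume "i \<in> J"
      then obtain j where j: "j < d" "i = base + j" by (auto simp: J_def)
      have i1: "1 \<le> i" "i < N" using j bN by (auto simp: base_def)
      have "cr i < d" "cq i = q" using cqr[of j] j by auto
      hence nrm: "norm (W i - s *\<^sub>R b) < e0" using stA(2) i1 uq by auto
      show "C i = 1 \<and> (\<forall>b'\<in>Basis. \<bar>(W i - s *\<^sub>R b) \<bullet> b'\<bar> \<le> 1 / (4 * real DIM('a)))"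
      proof (intro conjI ballI)
        show "C i = 1" using C1 i1 by simp
      next
        fix b' :: 'a assume "b' \<in> Basis"
        hence "\<bar>(W i - s *\<^sub>R b) \<bullet> b'\<bar> \<le> norm (W i - s *\<^sub>R b)" by (rule Basis_le_norm)
        thus "\<bar>(W i - s *\<^sub>R b) \<bullet> b'\<bar> \<le> 1 / (4 * real DIM('a))" using nrm by (simp add: e0_def d_def)
      qed
    qed
    define c where "c = base + d"
    have c1: "1 \<le> c" "c < N" using bN by (auto simp: c_def base_def)
    have "cr c = d" using cqr[of d] by (simp add: c_def)
    then obtain \<mu> where mu: "\<forall>j<d. \<mu> j \<ge> 0" "sum \<mu> {..<d} > 1"
      "W c = (\<Sum>j<d. \<mu> j *\<^sub>R W (c - d + j))" using stA(3) c1 by blast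
    define \<mu>' where "\<mu>' i = \<mu> (i - base)" for i
    have "(\<Sum>i\<in>J. \<mu>' i *\<^sub>R W i) = (\<Sum>j<d. \<mu> j *\<^sub>R W (base + j))"
      unfolding J_def by (subst sum.reindex[OF injb]) (simp add: comp_def \<mu>'_def)
    hence Wc: "W c = (\<Sum>i\<in>J. \<mu>' i *\<^sub>R W i)" using mu(3) by (simp add: c_def)
    have "sum \<mu>' J = sum \<mu> {..<d}"
      unfolding J_def by (subst sum.reindex[OF injb]) (simp add: comp_def \<mu>'_def)
    hence ms: "sum \<mu>' J > 1" using mu(2) by simp
    have mp: "\<forall>j\<in>J. \<mu>' j \<ge> 0" using mu(1) by (auto simp: J_def \<mu>'_def)
    show ?thesis by (rule cluster_okI[OF fJ J0 JN c1(2) C1[OF c1(1)] Jw mp ms Wc])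
  qed
  have "W 0 \<in> Basis" using stA(1) bbB d2' by simp
  moreover have "DIM('a) < N" by (simp add: N_def d_def)
  moreover have "C 0 = 0" "\<forall>i. 0 < i \<longrightarrow> C i = 1" by (auto simp: C_def)
  ultimately show ?thesis using gp cl by (intro exI[of _ N] exI[of _ W] exI[of _ C]) simp
qed

lemma collinear_cross:
  fixes a b c :: "'a::euclidean_space" and f g :: "'a \<Rightarrow> real"
  assumes "collinear {a, b, c}" "linear f" "linear g"
  shows "(f b - f a) * (g c - g a) = (g b - g a) * (f c - f a)"
proof -
  obtain u where u: "\<forall>x\<in>{a,b,c}. \<forall>y\<in>{a,b,c}. \<exists>t. x - y = t *\<^sub>R u"
    using assms(1) unfolding collinear_def by blast
  obtain t1 where t1: "b - a = t1 *\<^sub>R u" using u by blast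
  obtain t2 where t2: "c - a = t2 *\<^sub>R u" using u by blast
  have lf: "h y - h x = r * h u" if "linear h" "y - x = r *\<^sub>R u" for h :: "'a \<Rightarrow> real" and x y r
  proof -
    have "h y - h x = h (y - x)" by (simp add: linear_diff[OF that(1)])
    also have "\<dots> = r * h u" by (simp add: that(2) linear_cmul[OF that(1)])
    finally show ?thesis .
  qed
  have "f b - f a = t1 * f u" "g b - g a = t1 * g u" "f c - f a = t2 * f u" "g c - g a = t2 * g u"
    using lf[OF assms(2) t1] lf[OF assms(3) t1] lf[OF assms(2) t2] lf[OF assms(3) t2] by auto
  thus ?thesis by (simp add: algebra_simps)
qed

lemma aux_lin:
  fixes x y p :: real
  assumes "x + y - 1 \<le> p" "1 \<le> x" "1 \<le> y"
  shows "p - 3/4 * (x + y) + 5/4 > 0"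
proof -
  have h0: "0 < 4 * p - 3 * (x + y) + 5" using assms by (smt (verit))
  have eq: "p - 3/4 * (x + y) + 5/4 = (4 * p - 3 * (x + y) + 5) / 4" by (simp add: field_simps)
  have h: "0 < (4 * p - 3 * (x + y) + 5) / 4" using h0 by simp
  show ?thesis unfolding eq using h .
qed

lemma crossC:
  fixes s t :: nat
  assumes "s \<noteq> t"
  shows "(real s - 3/4) * ((real t)\<^sup>2 - 5/4) - ((real s)\<^sup>2 - 5/4) * (real t - 3/4) \<noteq> 0"
proof -
  have e: "(real s - 3/4) * ((real t)\<^sup>2 - 5/4) - ((real s)\<^sup>2 - 5/4) * (real t - 3/4)
      = (real t - real s) * (real s * real t - 3/4 * (real s + real t) + 5/4)"
    by (simp add: power2_eq_square field_simps)
  have ne: "real t - real s \<noteq> 0" using assms by simp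
  have pos: "real s * real t - 3/4 * (real s + real t) + 5/4 \<noteq> 0"
  proof (cases "s = 0 \<or> t = 0")
    case True
    thus ?thesis
    proof
      assume s0: "s = 0"
      have "4 * t \<noteq> 5 \<and> 3 * t \<noteq> 5" by presburger
      hence "3 * real t \<noteq> 5" by (metis of_nat_eq_iff of_nat_mult of_nat_numeral)
      thus ?thesis using s0 by simp
    next
      assume t0: "t = 0"
      have "3 * s \<noteq> 5" by presburger
      hence "3 * real s \<noteq> 5" by (metis of_nat_eq_iff of_nat_mult of_nat_numeral)
      thus ?thesis using t0 by simp
    qed
  next
    case False
    hence "real s \<ge> 1" "real t \<ge> 1" by auto
    hence "(real s - 1) * (real t - 1) \<ge> 0" by simp
    hence "real s * real t \<ge> real s + real t - 1" by (simp add: algebra_simps)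
    hence "real s * real t - 3/4 * (real s + real t) + 5/4 > 0" using \<open>real s \<ge> 1\<close> \<open>real t \<ge> 1\<close> by (rule aux_lin)
    thus ?thesis by simp
  qed
  show ?thesis unfolding e using ne pos by simp
qed

lemma crossP:
  fixes a b e :: nat
  assumes "a \<noteq> b" "a \<noteq> e" "b \<noteq> e"
  shows "(real b - real a) * ((real e)\<^sup>2 - (real a)\<^sup>2) - ((real b)\<^sup>2 - (real a)\<^sup>2) * (real e - real a) \<noteq> 0"
proof -
  have "(real b - real a) * ((real e)\<^sup>2 - (real a)\<^sup>2) - ((real b)\<^sup>2 - (real a)\<^sup>2) * (real e - real a)
     = (real b - real a) * (real e - real a) * (real e - real b)"
    by (simp add: algebra_simps power2_eq_square)
  moreover have "(real b - real a) * (real e - real a) * (real e - real b) \<noteq> 0" using assms by simp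
  ultimately show ?thesis by simp
qed

lemma caseA_main:
  fixes k :: nat
  assumes d2: "DIM('a::euclidean_space) \<ge> 2" and kd: "k + 2 \<le> DIM('a)"
  shows "\<exists>n (U :: nat \<Rightarrow> 'a set). (\<forall>i<n. k_flat k (U i)) \<and> inj_on U {..<n} \<and>
           general_position k n U \<and> \<not> convex_position k n U"
proof -
  define d where "d = DIM('a)"
  define m where "m = d - k"
  have m2: "m \<ge> 2" using kd by (simp add: m_def d_def)
  have md: "m \<le> d" by (simp add: m_def)
  obtain bb where bb: "bij_betw bb {..<d} (Basis::'a set)"
  proof -
    have fB: "finite (Basis::'a set)" by simp
    from ex_bij_betw_nat_finite[OF fB] obtain h where "bij_betw h {0..<card (Basis::'a set)} (Basis::'a set)" by blast
    thus ?thesis using that by (simp add: d_def atLeast0LessThan)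
  qed
  have bbB: "bb j \<in> Basis" if "j < d" for j using bb that by (auto simp: bij_betw_def)
  have bbsurj: "\<exists>j<d. b = bb j" if "b \<in> Basis" for b
    using bb that unfolding bij_betw_def by auto
  have bbinj: "inj_on bb {..<d}" using bb by (simp add: bij_betw_def)
  have bbi: "bb i \<bullet> bb j = (if i = j then 1 else 0)" if "i < d" "j < d" for i j
    using bb_inner[OF bb that] .
  have orth: "x \<bullet> bb j = 0" if x: "x \<in> span (bb ` S)" and S: "S \<subseteq> {..<d}" and j: "j < d" "j \<notin> S" for x S j
  proof -
    have "orthogonal (bb j) x"
    proof (rule orthogonal_to_span[OF x])
      fix y assume "y \<in> bb ` S"
      then obtain s where s: "s \<in> S" "y = bb s" by auto
      have "s < d" using s S by auto
      thus "orthogonal (bb j) y" using s j bbi[OF j(1) \<open>s < d\<close>] by (auto simp: orthogonal_def)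
    qed
    thus ?thesis by (simp add: orthogonal_def inner_commute)
  qed
  define A where "A = span (bb ` {..<m})"
  define L where "L = span (bb ` {m..<d})"
  have AL: "x = 0" if "x \<in> A" "x \<in> L" for x
  proof -
    have "\<forall>b\<in>Basis. x \<bullet> b = 0"
    proof
      fix b :: 'a assume "b \<in> Basis"
      then obtain j where j: "j < d" "b = bb j" using bbsurj by blast
      show "x \<bullet> b = 0"
      proof (cases "j < m")
        case True
        have s1: "{m..<d} \<subseteq> {..<d}" by auto
        have x1: "x \<in> span (bb ` {m..<d})" using that(2) by (simp add: L_def)
        have "j \<notin> {m..<d}" using True by simp
        thus ?thesis using orth[OF x1 s1 j(1)] j by simp
      next
        case False
        have s1: "{..<m} \<subseteq> {..<d}" using md by auto
        have x1: "x \<in> span (bb ` {..<m})" using that(1) by (simp add: A_def)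
        have "j \<notin> {..<m}" using False by simp
        thus ?thesis using orth[OF x1 s1 j(1)] j by simp
      qed
    qed
    thus ?thesis by (simp add: euclidean_all_zero_iff)
  qed
  have subA: "subspace A" by (simp add: A_def subspace_span)
  have subL: "subspace L" by (simp add: L_def subspace_span)
  have dimS: "dim (span (bb ` S)) = card S" if "S \<subseteq> {..<d}" for S
  proof -
    have "bb ` S \<subseteq> Basis" using that bbB by auto
    hence "independent (bb ` S)" using independent_Basis by (rule independent_mono[rotated])
    hence "dim (span (bb ` S)) = card (bb ` S)" by (rule dim_span_eq_card_independent)
    also have "\<dots> = card S" using inj_on_subset[OF bbinj that] by (rule card_image)
    finally show ?thesis .
  qed
  have dimL: "dim L = k"
  proof -
    have s1: "{m..<d} \<subseteq> {..<d}" by auto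
    have "dim L = card {m..<d}" unfolding L_def by (rule dimS[OF s1])
    thus ?thesis using kd by (simp add: m_def d_def)
  qed
  have dimA: "dim A = m"
  proof -
    have s1: "{..<m} \<subseteq> {..<d}" using md by auto
    have "dim A = card {..<m}" unfolding A_def by (rule dimS[OF s1])
    thus ?thesis by simp
  qed
  define c where "c = (1/4::real) *\<^sub>R (bb 0 + bb 1)"
  define p where "p i = (if i = 0 then c else if i = 1 then 0 else bb (i - 2))" for i
  define n where "n = m + 2"
  have bbA: "bb r \<in> A" if "r < m" for r using that by (auto simp: A_def intro: span_base)
  have b0: "bb 0 \<in> A" using bbA[of 0] m2 by simp
  have b1: "bb 1 \<in> A" using bbA[of 1] m2 by simp
  have cA: "c \<in> A" unfolding c_def by (rule subspace_mul[OF subA subspace_add[OF subA b0 b1]])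
  have pA: "p i \<in> A" if "i < n" for i
    using that cA bbA[of "i - 2"] by (auto simp: p_def n_def A_def span_zero)
  define f where "f x = (\<Sum>r<m. real (r + 1) * (x \<bullet> bb r))" for x
  define g where "g x = (\<Sum>r<m. (real (r + 1))\<^sup>2 * (x \<bullet> bb r))" for x
  have linf: "linear f" unfolding f_def
    by (intro linearI) (auto simp: inner_add_left sum.distrib algebra_simps sum_distrib_left)
  have ling: "linear g" unfolding g_def
    by (intro linearI) (auto simp: inner_add_left sum.distrib algebra_simps sum_distrib_left)
  have fbb: "f (bb s) = real (s + 1)" "g (bb s) = (real (s + 1))\<^sup>2" if s: "s < m" for s
  proof -
    have "f (bb s) = (\<Sum>r<m. if r = s then real (s + 1) else 0)"
      unfolding f_def using s md bbi by (intro sum.cong refl) (auto simp: inner_commute)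
    thus "f (bb s) = real (s + 1)" using s by simp
    have "g (bb s) = (\<Sum>r<m. if r = s then (real (s + 1))\<^sup>2 else 0)"
      unfolding g_def using s md bbi by (intro sum.cong refl) (auto simp: inner_commute)
    thus "g (bb s) = (real (s + 1))\<^sup>2" using s by simp
  qed
  have fc: "f c = 3/4" "g c = 5/4"
  proof -
    have "f c = (1/4) * (f (bb 0) + f (bb 1))" unfolding c_def
      by (simp add: linear_cmul[OF linf] linear_add[OF linf])
    thus "f c = 3/4" using fbb m2 by simp
    have "g c = (1/4) * (g (bb 0) + g (bb 1))" unfolding c_def
      by (simp add: linear_cmul[OF ling] linear_add[OF ling])
    thus "g c = 5/4" using fbb m2 by simp
  qed
  have fp: "f (p i) = real (i - 1) \<and> g (p i) = (real (i - 1))\<^sup>2" if "1 \<le> i" "i < n" for i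
  proof (cases "i = 1")
    case True
    thus ?thesis by (simp add: p_def linear_0[OF linf] linear_0[OF ling])
  next
    case False
    hence "i - 2 < m" "i - 2 + 1 = i - 1" using that by (auto simp: n_def)
    thus ?thesis using False that fbb[of "i - 2"] by (simp add: p_def)
  qed
  have fp0: "f (p 0) = 3/4" "g (p 0) = 5/4" using fc by (simp_all add: p_def)
  have nat34: "real j \<noteq> 3/4" for j :: nat
  proof (cases "j = 0")
    case True thus ?thesis by simp
  next
    case False hence "real j \<ge> 1" by simp
    thus ?thesis by auto
  qed
  have pinj: "inj_on p {..<n}"
  proof (rule inj_onI)
    fix i j assume i: "i \<in> {..<n}" and j: "j \<in> {..<n}" and pij: "p i = p j"
    have fij: "f (p i) = f (p j)" using pij by simp
    show "i = j"
    proof (cases "i = 0")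
      case True
      show ?thesis
      proof (rule ccontr)
        assume "i \<noteq> j"
        hence "1 \<le> j" using True by simp
        hence "f (p j) = real (j - 1)" using fp j by auto
        thus False using fij True fp0 nat34 by simp
      qed
    next
      case False
      show ?thesis
      proof (cases "j = 0")
        case True
        have "f (p i) = real (i - 1)" using fp i False by auto
        thus ?thesis using fij True fp0 nat34 by simp
      next
        case False
        have "real (i - 1) = real (j - 1)" using fp[of i] fp[of j] i j False \<open>i \<noteq> 0\<close> fij by auto
        thus ?thesis using False \<open>i \<noteq> 0\<close> by simp
      qed
    qed
  qed
  define U where "U i = (+) (p i) ` L" for i
  have memU: "x \<in> U i \<longleftrightarrow> x - p i \<in> L" for x i
  proof
    assume "x \<in> U i" thus "x - p i \<in> L" by (auto simp: U_def)
  next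
    assume "x - p i \<in> L"
    hence "p i + (x - p i) \<in> U i" unfolding U_def by (rule imageI)
    thus "x \<in> U i" by simp
  qed
  have flat: "k_flat k (U i)" for i
  proof -
    have "affine L" using subL by (rule subspace_imp_affine)
    hence "affine (U i)" unfolding U_def by (simp add: affine_translation[symmetric])
    moreover have "p i \<in> U i" using memU subL by (simp add: subspace_0)
    moreover have "aff_dim (U i) = int k"
      unfolding U_def aff_dim_translation_eq using aff_dim_subspace[OF subL] dimL by simp
    ultimately show ?thesis unfolding k_flat_def by blast
  qed
  have injU: "inj_on U {..<n}"
  proof (rule inj_onI)
    fix i j assume i: "i \<in> {..<n}" and j: "j \<in> {..<n}" and Uij: "U i = U j"
    have "p i \<in> U i" using memU subL by (simp add: subspace_0)
    hence "p i - p j \<in> L" using Uij memU by simp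
    moreover have "p i - p j \<in> A" using pA i j subA by (auto intro: subspace_diff)
    ultimately have "p i - p j = 0" using AL by blast
    thus "i = j" using pinj i j by (simp add: inj_on_def)
  qed
  have capA: "U i \<inter> A = {p i}" if i: "i < n" for i
  proof
    show "U i \<inter> A \<subseteq> {p i}"
    proof
      fix x assume x: "x \<in> U i \<inter> A"
      hence "x - p i \<in> L" using memU by blast
      moreover have "x - p i \<in> A" using x pA[OF i] subA by (auto intro: subspace_diff)
      ultimately have "x - p i = 0" using AL by blast
      thus "x \<in> {p i}" by simp
    qed
  next
    show "{p i} \<subseteq> U i \<inter> A" using memU subL pA[OF i] by (simp add: subspace_0)
  qed
  have ncol: "\<not> collinear {p i, p j, p l}" if ijl: "i < n" "j < n" "l < n" "i \<noteq> j" "i \<noteq> l" "j \<noteq> l" for i j l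
  proof
    assume col: "collinear {p i, p j, p l}"
    have cc: "(f b - f a) * (g e - g a) = (g b - g a) * (f e - f a)" if "collinear {a, b, e}" for a b e
      using collinear_cross[OF that linf ling] .
    have caseC: "False" if col': "collinear {p 0, p s, p t}" and st: "1 \<le> s" "1 \<le> t" "s < n" "t < n" "s \<noteq> t" for s t
    proof -
      have "(f (p s) - f (p 0)) * (g (p t) - g (p 0)) = (g (p s) - g (p 0)) * (f (p t) - f (p 0))"
        by (rule cc[OF col'])
      hence "(real (s - 1) - 3/4) * ((real (t - 1))\<^sup>2 - 5/4) - ((real (s - 1))\<^sup>2 - 5/4) * (real (t - 1) - 3/4) = 0"
        using fp[of s] fp[of t] st fp0 by simp
      moreover have "s - 1 \<noteq> t - 1" using st by simp
      ultimately show False using crossC by blast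
    qed
    show False
    proof (cases "i = 0")
      case True thus False using caseC[of j l] col ijl by simp
    next
      case i0: False
      show False
      proof (cases "j = 0")
        case True
        have "collinear {p 0, p i, p l}" using col True by (simp add: insert_commute)
        thus False using caseC[of i l] ijl i0 True by simp
      next
        case j0: False
        show False
        proof (cases "l = 0")
          case True
          have "collinear {p 0, p i, p j}" using col True by (simp add: insert_commute)
          thus False using caseC[of i j] ijl i0 j0 True by simp
        next
          case l0: False
          have "(f (p j) - f (p i)) * (g (p l) - g (p i)) = (g (p j) - g (p i)) * (f (p l) - f (p i))"
            by (rule cc[OF col])
          hence "(real (j - 1) - real (i - 1)) * ((real (l - 1))\<^sup>2 - (real (i - 1))\<^sup>2) -
              ((real (j - 1))\<^sup>2 - (real (i - 1))\<^sup>2) * (real (l - 1) - real (i - 1)) = 0"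
            using fp[of i] fp[of j] fp[of l] ijl i0 j0 l0 by simp
          moreover have "i - 1 \<noteq> j - 1" "i - 1 \<noteq> l - 1" "j - 1 \<noteq> l - 1" using ijl i0 j0 l0 by auto
          ultimately show False using crossP by blast
        qed
      qed
    qed
  qed
  have hullA: "affine hull (p ` {..<n}) = A"
  proof -
    have "0 \<in> p ` {..<n}" using m2 by (auto simp: p_def n_def image_def intro!: bexI[of _ 1])
    hence "affine hull (p ` {..<n}) = span (p ` {..<n})" by (intro affine_hull_span_0 hull_inc)
    also have "\<dots> = A"
    proof
      show "span (p ` {..<n}) \<subseteq> A" using pA subA by (intro span_minimal) auto
    next
      have "bb ` {..<m} \<subseteq> p ` {..<n}"
      proof
        fix y assume "y \<in> bb ` {..<m}"
        then obtain r where r: "r < m" "y = bb r" by auto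
        have "p (r + 2) = y" using r by (simp add: p_def)
        moreover have "r + 2 < n" using r by (simp add: n_def)
        ultimately show "y \<in> p ` {..<n}" by force
      qed
      thus "A \<subseteq> span (p ` {..<n})" unfolding A_def by (rule span_mono)
    qed
    finally show ?thesis .
  qed
  have flatA: "k_flat (DIM('a) - k) A"
  proof -
    have "affine A" using subA by (rule subspace_imp_affine)
    moreover have "A \<noteq> {}" using subA subspace_0 by blast
    moreover have "aff_dim A = int (DIM('a) - k)" using aff_dim_subspace[OF subA] dimA by (simp add: m_def d_def)
    ultimately show ?thesis unfolding k_flat_def by blast
  qed
  have gpos: "general_position k n U"
    unfolding general_position_def using kd
    apply (simp only: if_True)
    apply (rule exI[of _ A], rule exI[of _ p])
    using flatA capA pinj ncol hullA by blast
  have ncp: "\<not> convex_position k n U"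
  proof
    assume "convex_position k n U"
    then obtain P :: "'a set" where P: "polytope P"
      and F: "\<forall>i<n. (U i \<inter> P) face_of P \<and> aff_dim (U i \<inter> P) = int k"
      unfolding convex_position_def by blast
    have cP: "convex P" using P by (rule polytope_imp_convex)
    have ne: "U i \<inter> P \<noteq> {}" if "i < n" for i
    proof
      assume "U i \<inter> P = {}"
      hence "aff_dim (U i \<inter> P) = -1" by simp
      thus False using F that by simp
    qed
    have n3: "1 < n" "2 < n" "3 < n" "0 < n" using m2 by (auto simp: n_def)
    obtain x1 where x1: "x1 \<in> U 1" "x1 \<in> P" using ne[OF n3(1)] by blast
    obtain x2 where x2: "x2 \<in> U 2" "x2 \<in> P" using ne[OF n3(2)] by blast
    obtain x3 where x3: "x3 \<in> U 3" "x3 \<in> P" using ne[OF n3(3)] by blast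
    have p123: "p 1 = 0" "p 2 = bb 0" "p 3 = bb 1" "p 0 = c" by (simp_all add: p_def)
    define w where "w = (1/2::real) *\<^sub>R x2 + (1/2::real) *\<^sub>R x3"
    define x where "x = (1/2::real) *\<^sub>R x1 + (1/2::real) *\<^sub>R w"
    have wP: "w \<in> P" unfolding w_def using cP x2(2) x3(2) by (rule convexD) auto
    have xP: "x \<in> P" unfolding x_def using cP x1(2) wP by (rule convexD) auto
    have y1: "x1 - p 1 \<in> L" using x1 memU by blast
    have y2: "x2 - p 2 \<in> L" using x2 memU by blast
    have y3: "x3 - p 3 \<in> L" using x3 memU by blast
    have "x - p 0 = (1/2::real) *\<^sub>R (x1 - p 1) + (1/4::real) *\<^sub>R (x2 - p 2) + (1/4::real) *\<^sub>R (x3 - p 3)"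
      unfolding x_def w_def p123 c_def by (simp add: algebra_simps)
    also have "\<dots> \<in> L" using y1 y2 y3 subL by (intro subspace_add subspace_mul) auto
    finally have xU0: "x \<in> U 0" using memU by blast
    have F0: "(U 0 \<inter> P) face_of P" using F n3(4) by blast
    have "x1 \<in> U 0"
    proof (cases "x1 = w")
      case True
      hence "x = x1" by (simp add: x_def scaleR_add_left[symmetric])
      thus ?thesis using xU0 by simp
    next
      case False
      have "x \<in> open_segment x1 w" using False unfolding x_def
        by (auto simp: in_segment intro!: exI[of _ "1/2"])
      hence "x1 \<in> U 0 \<inter> P" using F0 x1(2) wP xU0 xP unfolding face_of_def by blast
      thus ?thesis by blast
    qed
    hence y0: "x1 - p 0 \<in> L" using memU by blast
    have "(x1 - p 1) - (x1 - p 0) \<in> L" by (rule subspace_diff[OF subL y1 y0])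
    hence "c \<in> L" using p123 by simp
    hence "c = 0" using AL cA by blast
    moreover have "c \<bullet> bb 0 = 1/4" using bbi m2 md by (simp add: c_def inner_add_left)
    ultimately show False by simp
  qed
  show ?thesis using flat injU gpos ncp by blast
qed

lemma caseB_main:
  fixes k :: nat
  assumes d2: "DIM('a::euclidean_space) \<ge> 2" and k: "k = DIM('a) - 1"
  shows "\<exists>n (U :: nat \<Rightarrow> 'a set). (\<forall>i<n. k_flat k (U i)) \<and> inj_on U {..<n} \<and>
           general_position k n U \<and> \<not> convex_position k n U"
proof -
  obtain N and W :: "nat \<Rightarrow> 'a" and C where gp: "GP N W C" and dN: "DIM('a) < N" and C0: "C 0 = 0"
    and C1: "\<forall>i. 0 < i \<longrightarrow> C i = 1" and W0: "W 0 \<in> Basis"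
    and cl: "\<forall>b s. b \<in> Basis \<longrightarrow> s \<in> {1, -1} \<longrightarrow> cluster_ok W C N (s *\<^sub>R b)"
    using caseB_exists[OF d2] by blast
  have gp1: "\<forall>I. I \<subseteq> {..<N} \<and> card I \<le> DIM('a) \<longrightarrow> inj_on W I \<and> independent (W ` I)"
    using gp unfolding GP_def by (rule conjunct1)
  have gp2: "\<forall>I. I \<subseteq> {..<N} \<and> card I = Suc DIM('a) \<longrightarrow> \<not> (\<exists>x. \<forall>i\<in>I. W i \<bullet> x = C i)"
    using gp unfolding GP_def by (rule conjunct2)
  define U where "U i = {x. W i \<bullet> x = C i}" for i
  have fin: "finite I" if "I \<subseteq> {..<N}" for I using that finite_subset[OF _ finite_lessThan] by blast
  have solI: "\<exists>x. \<forall>i\<in>I. W i \<bullet> x = C i" if I: "I \<subseteq> {..<N}" "card I = DIM('a)" for I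
  proof -
    have "inj_on W I \<and> independent (W ` I)" using gp1 I by simp
    thus ?thesis using sol_exists[OF fin[OF I(1)] I(2)] by blast
  qed
  have uniqI: "x = y" if I: "I \<subseteq> {..<N}" "card I = DIM('a)"
      and x: "\<forall>i\<in>I. W i \<bullet> x = C i" and y: "\<forall>i\<in>I. W i \<bullet> y = C i" for I x y
  proof -
    have "inj_on W I \<and> independent (W ` I)" using gp1 I by simp
    thus ?thesis using sol_unique[OF fin[OF I(1)] I(2) _ _ x y] by blast
  qed
  have noSuc: "\<not> (\<forall>i\<in>T. W i \<bullet> x = C i)" if T: "T \<subseteq> {..<N}" "card T \<ge> Suc DIM('a)" for T x
  proof
    assume x: "\<forall>i\<in>T. W i \<bullet> x = C i"
    obtain T' where T': "T' \<subseteq> T" "card T' = Suc DIM('a)" using T(2) by (rule obtain_subset_with_card_n)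
    have "T' \<subseteq> {..<N}" using T' T(1) by blast
    hence "\<not> (\<exists>x. \<forall>i\<in>T'. W i \<bullet> x = C i)" using gp2 T'(2) by blast
    thus False using x T'(1) by blast
  qed
  have Wnz: "W i \<noteq> 0" if "i < N" for i
    using gp1[rule_format, of "{i}"] that d2 by simp
  have flat: "k_flat k (U i)" if i: "i < N" for i
  proof -
    have "(C i / (W i \<bullet> W i)) *\<^sub>R W i \<in> U i" using Wnz[OF i] by (simp add: U_def)
    hence "U i \<noteq> {}" by blast
    moreover have "aff_dim (U i) = int k"
      unfolding U_def using aff_dim_hyperplane[OF Wnz[OF i]] k by simp
    ultimately show ?thesis by (simp add: k_flat_def U_def affine_hyperplane)
  qed
  have inj: "inj_on U {..<N}"
  proof (rule inj_onI)
    fix i j assume i: "i \<in> {..<N}" and j: "j \<in> {..<N}" and Uij: "U i = U j"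
    show "i = j"
    proof (rule ccontr)
      assume ij: "i \<noteq> j"
      have "card ({..<N} - {i, j}) = N - 2" using i j ij by (simp add: card_Diff_subset)
      hence "DIM('a) - 1 \<le> card ({..<N} - {i, j})" using dN by simp
      then obtain T where T: "T \<subseteq> {..<N} - {i, j}" "card T = DIM('a) - 1"
        by (rule obtain_subset_with_card_n)
      define J where "J = insert i T"
      have fT: "finite T" using T(1) finite_subset by blast
      have iT: "i \<notin> T" "j \<notin> T" using T(1) by auto
      have J: "J \<subseteq> {..<N}" "card J = DIM('a)" using T i fT iT(1) d2 by (auto simp: J_def)
      obtain x where x: "\<forall>l\<in>J. W l \<bullet> x = C l" using solI[OF J] by blast
      have "x \<in> U i" using x by (simp add: J_def U_def)
      hence "x \<in> U j" using Uij by simp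
      hence "W j \<bullet> x = C j" by (simp add: U_def)
      hence "\<forall>l\<in>insert j J. W l \<bullet> x = C l" using x by simp
      moreover have "insert j J \<subseteq> {..<N}" using J j by simp
      moreover have "card (insert j J) \<ge> Suc DIM('a)"
        using J iT ij fT by (simp add: J_def)
      ultimately show False using noSuc by blast
    qed
  qed
  have gpos: "general_position k N U"
  proof -
    have nk: "\<not> k + 2 \<le> DIM('a)" using k d2 by simp
    define q where "q I = (THE x. \<forall>i\<in>I. W i \<bullet> x = C i)" for I
    have qI: "\<forall>i\<in>I. W i \<bullet> q I = C i" if I: "I \<subseteq> {..<N}" "card I = DIM('a)" for I
    proof -
      obtain x where x: "\<forall>i\<in>I. W i \<bullet> x = C i" using solI[OF I] by blast
      have "\<forall>i\<in>I. W i \<bullet> (THE x. \<forall>i\<in>I. W i \<bullet> x = C i) = C i"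
        by (rule theI[of "\<lambda>x. \<forall>i\<in>I. W i \<bullet> x = C i", OF x]) (use uniqI[OF I _ x] in blast)
      thus ?thesis by (simp add: q_def)
    qed
    have inter: "(\<Inter>i\<in>I. U i) = {q I}" if I: "I \<subseteq> {..<N} \<and> card I = DIM('a)" for I
    proof -
      have I0: "I \<noteq> {}" using I by auto
      show ?thesis
      proof (rule set_eqI)
        fix y
        have "y \<in> (\<Inter>i\<in>I. U i) \<longleftrightarrow> (\<forall>i\<in>I. W i \<bullet> y = C i)" by (simp add: U_def)
        also have "\<dots> \<longleftrightarrow> y = q I" using uniqI[of I y "q I"] qI[of I] I by auto
        finally show "y \<in> (\<Inter>i\<in>I. U i) \<longleftrightarrow> y \<in> {q I}" by simp
      qed
    qed
    have injq: "inj_on q {I. I \<subseteq> {..<N} \<and> card I = DIM('a)}"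
    proof (rule inj_onI)
      fix I I' assume I: "I \<in> {I. I \<subseteq> {..<N} \<and> card I = DIM('a)}"
        and I': "I' \<in> {I. I \<subseteq> {..<N} \<and> card I = DIM('a)}" and qq: "q I = q I'"
      show "I = I'"
      proof (rule ccontr)
        assume ne: "I \<noteq> I'"
        have fI: "finite I" "finite I'" using I I' fin by auto
        have "\<forall>i\<in>I \<union> I'. W i \<bullet> q I = C i" using qI[of I] qI[of I'] I I' qq by auto
        moreover have "I \<union> I' \<subseteq> {..<N}" using I I' by auto
        moreover have "card (I \<union> I') \<ge> Suc DIM('a)"
        proof -
          have "I \<subset> I \<union> I'"
          proof
            show "I \<subseteq> I \<union> I'" by blast
            show "I \<noteq> I \<union> I'"
            proof
              assume "I = I \<union> I'"
              hence "I' \<subseteq> I" by blast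
              hence "I' = I" using fI I I' by (intro card_subset_eq) auto
              thus False using ne by simp
            qed
          qed
          hence "card I < card (I \<union> I')" using fI by (intro psubset_card_mono) auto
          thus ?thesis using I by simp
        qed
        ultimately show False using noSuc by blast
      qed
    qed
    show ?thesis unfolding general_position_def using nk dN inter injq
      by (simp only: if_False) (intro conjI exI[of _ q]; auto)
  qed
  have ncp: "\<not> convex_position k N U"
  proof
    assume "convex_position k N U"
    then obtain P :: "'a set" where P: "polytope P" "aff_dim P = int DIM('a)"
      and F: "\<forall>i<N. (U i \<inter> P) face_of P \<and> aff_dim (U i \<inter> P) = int k"
      unfolding convex_position_def by blast
    have faces: "({x. W i \<bullet> x = C i} \<inter> P) face_of P \<and> ({x. W i \<bullet> x = C i} \<inter> P) \<noteq> {}" if "i < N" for i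
    proof -
      have "(U i \<inter> P) face_of P" "aff_dim (U i \<inter> P) = int k" using F that by auto
      moreover have "U i \<inter> P \<noteq> {}"
      proof
        assume "U i \<inter> P = {}"
        hence "aff_dim (U i \<inter> P) = -1" by simp
        thus False using calculation(2) by simp
      qed
      ultimately show ?thesis by (simp add: U_def)
    qed
    have cl': "\<And>b s. b \<in> Basis \<Longrightarrow> s \<in> {1, -1} \<Longrightarrow> cluster_ok W C N (s *\<^sub>R b)" using cl by blast
    have N0: "0 < N" using dN by (simp add: gr0I)
    show False
      by (rule caseB_nonconvex[OF polytope_imp_convex[OF P(1)] faces W0 refl C0 N0 cl'])
  qed
  show ?thesis using flat inj gpos ncp by blast
qed

theorem theorem1p2:
  fixes k :: nat
  assumes "DIM('a::euclidean_space) \<ge> 2" and "k \<le> DIM('a) - 1"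
  shows "\<exists>n (U :: nat \<Rightarrow> 'a set).
           (\<forall>i<n. k_flat k (U i)) \<and> inj_on U {..<n} \<and>
           general_position k n U \<and> \<not> convex_position k n U"
proof (cases "k + 2 \<le> DIM('a)")
  case True
  show ?thesis by (rule caseA_main[OF assms(1) True])
next
  case False
  hence "k = DIM('a) - 1" using assms by simp
  show ?thesis by (rule caseB_main[OF assms(1) \<open>k = DIM('a) - 1\<close>])
qed

end
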